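(* Let $\mathcal{X},\mathcal{Y}$ be finite alphabets and $P_{XY}$ a joint PMF on $\mathcal{X}\times\mathcal{Y}$ with $P_X$ fully supported. Let $(X^N,Y^N)\sim P_{XY}^{\otimes N}$, $M\in\mathbb{N}$, $\beta>0$, $L=\beta\log M$, $N=ML$ (integer constraints ignored), with fragments $\boldsymbol{X}(i)=X_{(i-1)L+1}^{iL}$. Let $\hat X^N\in\arg\max_{\tilde X^N\in\mathcal{A}_L(X^N)}\mathbb{P}[Y^N\mid\tilde X^N]$ be a maximum-likelihood reconstruction, $\mathcal{A}_L(X^N)=\{(\boldsymbol{X}(\pi(1)),\ldots,\boldsymbol{X}(\pi(M))):\pi\in S_M\}$, with fragments $\hat{\boldsymbol{X}}(i)$. Let $\Delta:\mathcal{X}\times\mathcal{X}\to\mathbb{R}_+$ be a distortion measure, extended to fragments by $\Delta(\tilde{\boldsymbol{x}},\bar{\boldsymbol{x}})=\frac1L\sum_{j\in[L]}\Delta(\tilde x_j,\bar x_j)$; for $\delta>0$ let $\Xi_\delta=\frac1M\sum_{i\in[M]}\mathbb{1}\{\Delta(\boldsymbol{X}(i),\hat{\boldsymbol{X}}(i))\geq\delta\}$ and $\mathsf{FP}(\delta,\xi)=\mathbb{P}[\Xi_\delta\geq\xi]$. Define $$d^*_{P_{Y|X}}(\delta)=\min_{Q_{X_1X_2}\in\mathcal{P}(\mathcal{X}^2):\ \Delta(Q_{X_1X_2})\geq\delta} d_{P_{Y|X}}(Q_{X_1X_2}).$$ Assume $\beta<1/H(P_X)$. If $\xi>H(P_X)/d^*_{P_{Y|X}}(\delta)$,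 then $\mathsf{FP}(\delta,\xi)=o(1)$ as $M\to\infty$.
   Context: $d_{P_{Y|X}}(x_1,x_2)=-\log\sum_{y}\sqrt{P_{Y|X}(y|x_1)P_{Y|X}(y|x_2)}$; for a joint PMF $Q_{X_1X_2}$ on $\mathcal{X}^2$, $d_{P_{Y|X}}(Q_{X_1X_2})=\sum_{x_1,x_2}Q_{X_1X_2}(x_1,x_2)d_{P_{Y|X}}(x_1,x_2)$ and $\Delta(Q_{X_1X_2})=\sum_{x_1,x_2}Q_{X_1X_2}(x_1,x_2)\Delta(x_1,x_2)$. $H(P_X)$ is the Shannon entropy (natural logarithms); $\mathcal{P}(\mathcal{X}^2)$ is the probability simplex on $\mathcal{X}^2$. *)

theory Defs
  imports Complex_Main "HOL-Library.Extended_Real" "HOL-Combinatorics.Permutations"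
begin

definition PX :: "('x::finite \<times> 'y::finite \<Rightarrow> real) \<Rightarrow> 'x \<Rightarrow> real" where
  "PX P x = (\<Sum>y\<in>UNIV. P (x, y))"

definition Wc :: "('x::finite \<times> 'y::finite \<Rightarrow> real) \<Rightarrow> 'y \<Rightarrow> 'x \<Rightarrow> real" where
  "Wc P y x = P (x, y) / PX P x"

definition entropyX :: "('x::finite \<times> 'y::finite \<Rightarrow> real) \<Rightarrow> real" where
  "entropyX P = - (\<Sum>x\<in>UNIV. PX P x * ln (PX P x))"

definition bhatt :: "('x::finite \<times> 'y::finite \<Rightarrow> real) \<Rightarrow> 'x \<Rightarrow> 'x \<Rightarrow> real" where
  "bhatt P x1 x2 = (\<Sum>y\<in>UNIV. sqrt (Wc P y x1 * Wc P y x2))"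

definition dpair :: "('x::finite \<times> 'y::finite \<Rightarrow> real) \<Rightarrow> 'x \<Rightarrow> 'x \<Rightarrow> ereal" where
  "dpair P x1 x2 = (if bhatt P x1 x2 = 0 then \<infinity> else ereal (- ln (bhatt P x1 x2)))"

definition is_pmf :: "('a::finite \<Rightarrow> real) \<Rightarrow> bool" where
  "is_pmf Q \<longleftrightarrow> (\<forall>z. 0 \<le> Q z) \<and> sum Q UNIV = 1"

definition dQ :: "('x::finite \<times> 'y::finite \<Rightarrow> real) \<Rightarrow> ('x \<times> 'x \<Rightarrow> real) \<Rightarrow> ereal" where
  "dQ P Q = (\<Sum>z\<in>UNIV. ereal (Q z) * dpair P (fst z) (snd z))"

definition DeltaQ :: "('x \<Rightarrow> 'x \<Rightarrow> real) \<Rightarrow> ('x::finite \<times> 'x \<Rightarrow> real) \<Rightarrow> real" where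
  "DeltaQ \<Delta> Q = (\<Sum>z\<in>UNIV. Q z * \<Delta> (fst z) (snd z))"

(* d^*_{P_{Y|X}}(delta) = min over Q in P(X^2) with Delta(Q) >= delta of d(Q)
   (infimum in the extended reals; +infinity if the constraint set is empty) *)
definition dstar :: "('x::finite \<times> 'y::finite \<Rightarrow> real) \<Rightarrow> ('x \<Rightarrow> 'x \<Rightarrow> real) \<Rightarrow> real \<Rightarrow> ereal" where
  "dstar P \<Delta> \<delta> = (INF Q \<in> {Q. is_pmf Q \<and> DeltaQ \<Delta> Q \<ge> \<delta>}. dQ P Q)"

definition fraglen :: "real \<Rightarrow> nat \<Rightarrow> nat" where
  "fraglen \<beta> M = nat \<lceil>\<beta> * ln (real M)\<rceil>"

(* i-th fragment (0-indexed): X_{iL+1}^{(i+1)L} *)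
definition frag :: "nat \<Rightarrow> 'a list \<Rightarrow> nat \<Rightarrow> 'a list" where
  "frag L xs i = take L (drop (i * L) xs)"

definition arrange :: "nat \<Rightarrow> nat \<Rightarrow> 'a list \<Rightarrow> (nat \<Rightarrow> nat) \<Rightarrow> 'a list" where
  "arrange L M xs \<pi> = concat (map (\<lambda>i. frag L xs (\<pi> i)) [0..<M])"

definition lik :: "('x::finite \<times> 'y::finite \<Rightarrow> real) \<Rightarrow> 'x list \<Rightarrow> 'y list \<Rightarrow> real" where
  "lik P xs ys = (\<Prod>k<length xs. Wc P (ys ! k) (xs ! k))"

definition is_ML :: "('x::finite \<times> 'y::finite \<Rightarrow> real) \<Rightarrow> nat \<Rightarrow> nat \<Rightarrow> 'x list \<Rightarrow> 'y list \<Rightarrow> (nat \<Rightarrow> nat) \<Rightarrow> bool" where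
  "is_ML P L M xs ys \<pi> \<longleftrightarrow> \<pi> permutes {..<M} \<and>
     (\<forall>\<sigma>. \<sigma> permutes {..<M} \<longrightarrow> lik P (arrange L M xs \<sigma>) ys \<le> lik P (arrange L M xs \<pi>) ys)"

definition frag_dist :: "('x \<Rightarrow> 'x \<Rightarrow> real) \<Rightarrow> nat \<Rightarrow> 'x list \<Rightarrow> 'x list \<Rightarrow> real" where
  "frag_dist \<Delta> L a b = (1 / real L) * (\<Sum>j<L. \<Delta> (a ! j) (b ! j))"

(* Xi_delta, with hat X(i) = X(pi(i)) *)
definition Xi :: "('x \<Rightarrow> 'x \<Rightarrow> real) \<Rightarrow> real \<Rightarrow> nat \<Rightarrow> nat \<Rightarrow> 'x list \<Rightarrow> (nat \<Rightarrow> nat) \<Rightarrow> real" where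
  "Xi \<Delta> \<delta> L M xs \<pi> =
     real (card {i\<in>{..<M}. frag_dist \<Delta> L (frag L xs i) (frag L xs (\<pi> i)) \<ge> \<delta>}) / real M"

(* FP(delta, xi) = P[Xi_delta >= xi] under (X^N,Y^N) ~ P_XY^{\<otimes>N}, N = M L,
   where sel M xs ys is the permutation chosen by the ML reconstruction *)
definition FP :: "('x::finite \<times> 'y::finite \<Rightarrow> real) \<Rightarrow> ('x \<Rightarrow> 'x \<Rightarrow> real) \<Rightarrow> real \<Rightarrow> real \<Rightarrow> real
     \<Rightarrow> (nat \<Rightarrow> 'x list \<Rightarrow> 'y list \<Rightarrow> nat \<Rightarrow> nat) \<Rightarrow> nat \<Rightarrow> real" where
  "FP P \<Delta> \<beta> \<delta> \<xi> sel M =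
     (let L = fraglen \<beta> M; N = M * L in
      \<Sum>(xs, ys) \<in> {(xs, ys). length xs = N \<and> length ys = N}.
         (\<Prod>k<N. P (xs ! k, ys ! k)) * (if Xi \<Delta> \<delta> L M xs (sel M xs ys) \<ge> \<xi> then 1 else 0))"

end

theory Submission
  imports Defs
begin


lemma sum_lists_prod:
  fixes f :: "nat \<Rightarrow> 'a::finite \<Rightarrow> real"
  shows "(\<Sum>xs\<in>{xs. length xs = n}. \<Prod>k<n. f k (xs ! k)) = (\<Prod>k<n. \<Sum>a\<in>UNIV. f k a)"
proof (induction n arbitrary: f)
  case 0
  have "{xs::'a list. length xs = 0} = {[]}" by auto
  then show ?case by simp
next
  case (Suc n)
  have eq: "{xs::'a list. length xs = Suc n} = (\<lambda>(a,xs). a#xs) ` (UNIV \<times> {xs. length xs = n})"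
    by (auto simp: length_Suc_conv)
  have inj: "inj_on (\<lambda>(a,xs). a#(xs::'a list)) (UNIV \<times> {xs. length xs = n})"
    by (auto simp: inj_on_def)
  have fin: "finite {xs::'a list. length xs = n}"
    using finite_lists_length_eq[of "UNIV::'a set" n] by simp
  have "(\<Sum>xs\<in>{xs. length xs = Suc n}. \<Prod>k<Suc n. f k (xs ! k))
      = (\<Sum>(a,xs)\<in>UNIV \<times> {xs. length xs = n}. \<Prod>k<Suc n. f k ((a#xs) ! k))"
    unfolding eq by (subst sum.reindex[OF inj]) (simp add: case_prod_unfold)
  also have "\<dots> = (\<Sum>a\<in>UNIV. \<Sum>xs\<in>{xs. length xs = n}. f 0 a * (\<Prod>k<n. f (Suc k) (xs ! k)))"
    by (subst sum.cartesian_product[symmetric]) (simp only: prod.lessThan_Suc_shift nth_Cons_0 nth_Cons_Suc)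
  also have "\<dots> = (\<Sum>a\<in>UNIV. f 0 a * (\<Prod>k<n. \<Sum>b\<in>UNIV. f (Suc k) b))"
    by (simp add: sum_distrib_left[symmetric] Suc.IH[of "\<lambda>k. f (Suc k)"])
  also have "\<dots> = (\<Prod>k<Suc n. \<Sum>a\<in>UNIV. f k a)"
    by (simp only: prod.lessThan_Suc_shift sum_distrib_right)
  finally show ?case .
qed

lemma frag_concat:
  assumes "\<forall>l\<in>set ls. length l = L" "i < length ls"
  shows "frag L (concat ls) i = ls ! i"
  using assms
proof (induction ls arbitrary: i)
  case Nil then show ?case by simp
next
  case (Cons l ls)
  show ?case
  proof (cases i)
    case 0 then show ?thesis using Cons by (simp add: frag_def)
  next
    case (Suc i')
    have "frag L (concat (l#ls)) i = frag L (concat ls) i'"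
      using Cons.prems Suc by (simp add: frag_def add.commute)
    then show ?thesis using Cons Suc by simp
  qed
qed

lemma length_frag: "length xs = M * L \<Longrightarrow> i < M \<Longrightarrow> length (frag L xs i) = L"
proof -
  assume a: "length xs = M * L" "i < M"
  then have "i * L + L \<le> M * L" by (metis add.commute mult_Suc less_eq_Suc_le mult_le_mono1)
  then show ?thesis using a by (simp add: frag_def)
qed

lemma nth_frag: "length xs = M * L \<Longrightarrow> i < M \<Longrightarrow> j < L \<Longrightarrow> frag L xs i ! j = xs ! (i * L + j)"
  using length_frag[of xs M L i] by (simp add: frag_def add.commute)

lemma perm_lt: "\<sigma> permutes {..<M} \<Longrightarrow> i < M \<Longrightarrow> \<sigma> i < M"
  using permutes_in_image[of \<sigma> "{..<M}" i] by simp

lemma length_arrange: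
  assumes "length xs = M * L" "\<sigma> permutes {..<M}"
  shows "length (arrange L M xs \<sigma>) = M * L"
proof -
  have "\<forall>i\<in>set [0..<M]. length (frag L xs (\<sigma> i)) = L"
    using assms by (auto intro!: length_frag simp: perm_lt)
  have "length (arrange L M xs \<sigma>) = sum_list (map (\<lambda>i. length (frag L xs (\<sigma> i))) [0..<M])"
    unfolding arrange_def by (simp add: length_concat comp_def)
  also have "\<dots> = sum_list (map (\<lambda>i. L) [0..<M])"
    by (rule arg_cong[where f=sum_list], rule map_cong) (use \<open>\<forall>i\<in>set [0..<M]. _\<close> in auto)
  finally have "length (arrange L M xs \<sigma>) = sum_list (map (\<lambda>i. L) [0..<M])" .
  then show ?thesis by (simp add: sum_list_triv)
qed

lemma frag_arrange:
  assumes "length xs = M * L" "\<sigma> permutes {..<M}" "i < M"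
  shows "frag L (arrange L M xs \<sigma>) i = frag L xs (\<sigma> i)"
  unfolding arrange_def
  using assms by (subst frag_concat) (auto intro!: length_frag simp: perm_lt)

lemma concat_frags: "length xs = M * L \<Longrightarrow> concat (map (\<lambda>i. frag L xs i) [0..<M]) = xs"
proof (induction M arbitrary: xs)
  case 0 then show ?case by simp
next
  case (Suc M)
  have "concat (map (\<lambda>i. frag L xs i) [0..<Suc M]) = concat (map (\<lambda>i. frag L xs i) [0..<M]) @ frag L xs M"
    by simp
  also have "concat (map (\<lambda>i. frag L xs i) [0..<M]) = concat (map (\<lambda>i. frag L (take (M*L) xs) i) [0..<M])"
  proof (intro arg_cong[where f=concat] map_cong refl)
    fix i assume "i \<in> set [0..<M]"
    then have "i * L + L \<le> M * L" by (simp add: add.commute mult_Suc[symmetric] del: mult_Suc)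
    then show "frag L xs i = frag L (take (M*L) xs) i" by (simp add: frag_def take_drop min_def add.commute)
  qed
  also have "\<dots> = take (M*L) xs" using Suc by (intro Suc.IH) simp
  finally show ?case using Suc.prems by (simp add: frag_def)
qed

lemma arrange_id: "length xs = M * L \<Longrightarrow> arrange L M xs id = xs"
  unfolding arrange_def using concat_frags by simp



lemma prod_block:
  fixes g :: "nat \<Rightarrow> real"
  shows "(\<Prod>k<M*L. g k) = (\<Prod>i<M. \<Prod>j<L. g (i*L+j))"
proof -
  have "(\<Prod>k<M*L. g k) = (\<Prod>i<M. prod g {i*L..<i*L+L})"
    by (rule prod.nat_group[symmetric])
  also have "\<dots> = (\<Prod>i<M. \<Prod>j<L. g (i*L+j))"
  proof (rule prod.cong[OF refl])
    fix i
    show "prod g {i*L..<i*L+L} = (\<Prod>j<L. g (i*L+j))"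
      by (subst prod.atLeastLessThan_shift_0) (simp add: atLeast0LessThan comp_def)
  qed
  finally show ?thesis .
qed

lemma regroup:
  fixes pr :: "nat \<Rightarrow> 'z::finite" and h :: "'z \<Rightarrow> real"
  shows "(\<Sum>z\<in>UNIV. real (card {j\<in>{..<L}. pr j = z}) * h z) = (\<Sum>j<L. h (pr j))"
proof -
  have "(\<Sum>z\<in>UNIV. real (card {j\<in>{..<L}. pr j = z}) * h z) = (\<Sum>z\<in>UNIV. \<Sum>j\<in>{j\<in>{..<L}. pr j = z}. h (pr j))"
    by (intro sum.cong refl) simp
  also have "\<dots> = (\<Sum>j<L. h (pr j))"
    by (rule sum.group) auto
  finally show ?thesis .
qed



locale chan =
  fixes P :: "'x::finite \<times> 'y::finite \<Rightarrow> real"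
  assumes P_nonneg: "\<And>z. 0 \<le> P z"
    and P_sum: "(\<Sum>z\<in>UNIV. P z) = 1"
    and PX_pos: "\<And>x. 0 < PX P x"
begin

lemma PX_sum: "(\<Sum>x\<in>UNIV. PX P x) = 1"
  using P_sum unfolding PX_def by (simp add: sum.cartesian_product UNIV_Times_UNIV[symmetric] del: UNIV_Times_UNIV)

lemma PX_le1: "PX P x \<le> 1"
proof -
  have "PX P x \<le> (\<Sum>x\<in>UNIV. PX P x)"
    by (rule member_le_sum) (auto intro: less_imp_le PX_pos)
  then show ?thesis using PX_sum by simp
qed

lemma W_nonneg: "0 \<le> Wc P y x"
  unfolding Wc_def using P_nonneg PX_pos by (simp add: less_imp_le)

lemma W_sum: "(\<Sum>y\<in>UNIV. Wc P y x) = 1"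
  unfolding Wc_def using PX_pos[of x] by (simp add: sum_divide_distrib[symmetric] PX_def)

lemma P_eq: "P (x, y) = PX P x * Wc P y x"
  unfolding Wc_def using PX_pos[of x] by simp

lemma bhatt_nonneg: "0 \<le> bhatt P a b"
  unfolding bhatt_def by (rule sum_nonneg) (simp add: W_nonneg)

lemma bhatt_le1: "bhatt P a b \<le> 1"
proof -
  have "bhatt P a b \<le> (\<Sum>y\<in>UNIV. (Wc P y a + Wc P y b) / 2)"
    unfolding bhatt_def
  proof (rule sum_mono)
    fix y
    show "sqrt (Wc P y a * Wc P y b) \<le> (Wc P y a + Wc P y b) / 2"
      using arith_geo_mean_sqrt[of "Wc P y a" "Wc P y b"] W_nonneg by simp
  qed
  also have "\<dots> = 1" using W_sum[of a] W_sum[of b]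
    by (simp add: sum_divide_distrib[symmetric] sum.distrib)
  finally show ?thesis .
qed

lemma entropy_nonneg: "0 \<le> entropyX P"
proof -
  have "\<And>x. PX P x * ln (PX P x) \<le> 0"
    using PX_pos PX_le1 by (simp add: mult_nonneg_nonpos less_imp_le)
  then show ?thesis unfolding entropyX_def by (simp add: sum_nonpos)
qed

lemma frag_bound:
  fixes \<Delta> :: "'x \<Rightarrow> 'x \<Rightarrow> real" and a b :: "'x list"
  assumes L: "0 < L" and D: "ereal D \<le> dstar P \<Delta> \<delta>"
    and fd: "frag_dist \<Delta> L a b \<ge> \<delta>"
  shows "(\<Prod>j<L. bhatt P (a!j) (b!j)) \<le> exp (- real L * D)"
proof (cases "\<exists>j<L. bhatt P (a!j) (b!j) = 0")
  case True
  then have "(\<Prod>j<L. bhatt P (a!j) (b!j)) = 0" by (simp add: prod_zero_iff) blast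
  then show ?thesis by (metis exp_ge_zero)
next
  case False
  then have bpos: "\<And>j. j < L \<Longrightarrow> 0 < bhatt P (a!j) (b!j)"
    using bhatt_nonneg by (metis less_eq_real_def)
  define pr where "pr j = (a!j, b!j)" for j
  define Q where "Q z = real (card {j\<in>{..<L}. pr j = z}) / real L" for z
  have RG: "(\<Sum>z\<in>UNIV. Q z * h z) = (\<Sum>j<L. h (pr j)) / real L" for h :: "'x \<times> 'x \<Rightarrow> real"
    unfolding Q_def using regroup[of L pr h]
    by (simp add: sum_divide_distrib[symmetric] field_simps)
  have pmf: "is_pmf Q"
    unfolding is_pmf_def using RG[of "\<lambda>_. 1"] L by (simp add: Q_def)
  have "DeltaQ \<Delta> Q = frag_dist \<Delta> L a b"
    unfolding DeltaQ_def frag_dist_def using RG[of "\<lambda>z. \<Delta> (fst z) (snd z)"] by (simp add: pr_def)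
  with fd have "DeltaQ \<Delta> Q \<ge> \<delta>" by simp
  with pmf have "dstar P \<Delta> \<delta> \<le> dQ P Q"
    unfolding dstar_def by (intro INF_lower) simp
  also have "dQ P Q = (\<Sum>z\<in>UNIV. ereal (Q z * (- ln (bhatt P (fst z) (snd z)))))"
    unfolding dQ_def
  proof (rule sum.cong[OF refl])
    fix z :: "'x \<times> 'x"
    show "ereal (Q z) * dpair P (fst z) (snd z) = ereal (Q z * (- ln (bhatt P (fst z) (snd z))))"
    proof (cases "Q z = 0")
      case True then show ?thesis by (simp add: zero_ereal_def[symmetric])
    next
      case False
      then have "{j\<in>{..<L}. pr j = z} \<noteq> {}" unfolding Q_def by auto
      then obtain j where "j < L" "pr j = z" by auto
      then have "bhatt P (fst z) (snd z) > 0" using bpos by (auto simp: pr_def)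
      then show ?thesis unfolding dpair_def by simp
    qed
  qed
  also have "\<dots> = ereal (\<Sum>z\<in>UNIV. Q z * (- ln (bhatt P (fst z) (snd z))))"
    by (simp add: sum_ereal)
  also have "(\<Sum>z\<in>UNIV. Q z * (- ln (bhatt P (fst z) (snd z)))) = (\<Sum>j<L. - ln (bhatt P (a!j) (b!j))) / real L"
    using RG[of "\<lambda>z. - ln (bhatt P (fst z) (snd z))"] by (simp add: pr_def)
  finally have "D \<le> (\<Sum>j<L. - ln (bhatt P (a!j) (b!j))) / real L" using D by (meson ereal_less_eq(3) order_trans)
  then have "real L * D \<le> (\<Sum>j<L. - ln (bhatt P (a!j) (b!j)))"
    using L by (simp add: field_simps)
  then have "(\<Sum>j<L. ln (bhatt P (a!j) (b!j))) \<le> - real L * D"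
    by (simp only: sum_negf)
  then have "exp (\<Sum>j<L. ln (bhatt P (a!j) (b!j))) \<le> exp (- real L * D)" by simp
  also have "exp (\<Sum>j<L. ln (bhatt P (a!j) (b!j))) = (\<Prod>j<L. bhatt P (a!j) (b!j))"
    by (subst exp_sum) (auto intro!: prod.cong simp: bpos)
  finally show ?thesis .
qed

end


lemma sqrt_prod: "finite A \<Longrightarrow> sqrt (prod f A) = (\<Prod>i\<in>A. sqrt (f i))"
  by (induction A rule: finite_induct) (simp_all add: real_sqrt_mult)

context chan begin

definition px :: "'x list \<Rightarrow> real" where
  "px xs = (\<Prod>k<length xs. PX P (xs ! k))"

lemma px_nonneg: "0 \<le> px xs"
  unfolding px_def by (rule prod_nonneg) (simp add: less_imp_le PX_pos)

lemma px_pos: "0 < px xs"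
  unfolding px_def by (rule prod_pos) (simp add: PX_pos)

lemma lik_nonneg: "0 \<le> lik P xs ys"
  unfolding lik_def by (rule prod_nonneg) (simp add: W_nonneg)

lemma nth_arrange:
  assumes "length xs = M * L" "\<sigma> permutes {..<M}" "i < M" "j < L"
  shows "arrange L M xs \<sigma> ! (i*L+j) = xs ! (\<sigma> i * L + j)"
proof -
  have "arrange L M xs \<sigma> ! (i*L+j) = frag L (arrange L M xs \<sigma>) i ! j"
    using nth_frag[OF length_arrange[OF assms(1,2)] assms(3,4)] by simp
  also have "\<dots> = frag L xs (\<sigma> i) ! j" using frag_arrange[OF assms(1,2,3)] by simp
  also have "\<dots> = xs ! (\<sigma> i * L + j)" using nth_frag assms perm_lt by blast
  finally show ?thesis .
qed

lemma px_arrange: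
  assumes "length xs = M * L" "\<sigma> permutes {..<M}"
  shows "px (arrange L M xs \<sigma>) = px xs"
proof -
  define G where "G i = (\<Prod>j<L. PX P (xs ! (i*L+j)))" for i
  have "px (arrange L M xs \<sigma>) = (\<Prod>i<M. \<Prod>j<L. PX P (arrange L M xs \<sigma> ! (i*L+j)))"
    unfolding px_def length_arrange[OF assms] by (rule prod_block)
  also have "\<dots> = (\<Prod>i<M. G (\<sigma> i))"
    unfolding G_def using nth_arrange[OF assms] by simp
  also have "\<dots> = (\<Prod>i<M. G i)"
    using prod.permute[OF assms(2), of G] by (simp add: comp_def)
  also have "\<dots> = px xs"
    unfolding G_def px_def assms(1) by (rule prod_block[symmetric])
  finally show ?thesis .
qed

lemma sum_px: "(\<Sum>z\<in>{z. length z = n}. px z) = 1"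
proof -
  have "(\<Sum>z\<in>{z. length z = n}. px z) = (\<Sum>z\<in>{z. length z = n}. \<Prod>k<n. PX P (z ! k))"
    unfolding px_def by (rule sum.cong) auto
  also have "\<dots> = 1" by (subst sum_lists_prod[of "\<lambda>k a. PX P a"]) (simp add: PX_sum)
  finally show ?thesis .
qed

lemma sum_lik: "(\<Sum>ys\<in>{ys. length ys = length xs}. lik P xs ys) = 1"
  unfolding lik_def by (simp add: sum_lists_prod[of "\<lambda>k y. Wc P y (xs ! k)"] W_sum)

lemma sum_sqrt_lik:
  assumes "length z = length xs"
  shows "(\<Sum>ys\<in>{ys. length ys = length xs}. sqrt (lik P xs ys * lik P z ys))
     = (\<Prod>k<length xs. bhatt P (xs ! k) (z ! k))"
proof -
  have "(\<Sum>ys\<in>{ys. length ys = length xs}. sqrt (lik P xs ys * lik P z ys))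
    = (\<Sum>ys\<in>{ys. length ys = length xs}. \<Prod>k<length xs. sqrt (Wc P (ys!k) (xs ! k) * Wc P (ys!k) (z ! k)))"
    unfolding lik_def assms by (simp add: prod.distrib[symmetric] sqrt_prod)
  also have "\<dots> = (\<Prod>k<length xs. bhatt P (xs ! k) (z ! k))"
    by (subst sum_lists_prod) (simp add: bhatt_def)
  finally show ?thesis .
qed

lemma bad_prod:
  fixes B :: "nat \<Rightarrow> real"
  assumes "\<And>i. 0 \<le> B i" "\<And>i. B i \<le> 1" "\<And>i. i \<in> S \<Longrightarrow> B i \<le> e"
    "S \<subseteq> {..<M}" "0 < e" "e \<le> 1" "c \<le> real (card S)"
  shows "(\<Prod>i<M. B i) \<le> e powr c"
proof -
  have fS: "finite S" using assms(4) finite_subset by blast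
  have "(\<Prod>i<M. B i) = (\<Prod>i\<in>S. B i) * (\<Prod>i\<in>{..<M} - S. B i)"
    using prod.subset_diff[OF assms(4)] by (simp add: mult.commute)
  also have "\<dots> \<le> (\<Prod>i\<in>S. B i) * 1"
    by (intro mult_left_mono prod_le_1 prod_nonneg) (use assms in auto)
  also have "\<dots> \<le> (\<Prod>i\<in>S. e)"
    using prod_mono[of S B "\<lambda>_. e"] assms by auto
  also have "\<dots> = e ^ card S" by simp
  also have "\<dots> \<le> e powr c"
  proof -
    have "e ^ card S = e powr real (card S)" using assms(5) by (simp add: powr_realpow)
    also have "\<dots> \<le> e powr c" using assms by (intro powr_mono') auto
    finally show ?thesis .
  qed
  finally show ?thesis .
qed

end


context chan begin

lemma per_xs:
  fixes \<Delta> :: "'x \<Rightarrow> 'x \<Rightarrow> real" and sel :: "'y list \<Rightarrow> nat \<Rightarrow> nat"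
  assumes M: "0 < M" and L: "0 < L" and len: "length xs = M * L"
    and D0: "0 \<le> D" and Dle: "ereal D \<le> dstar P \<Delta> \<delta>" and xi: "0 < \<xi>"
    and hML: "\<And>ys. length ys = M * L \<Longrightarrow> is_ML P L M xs ys (sel ys)"
  shows "(\<Sum>ys\<in>{ys. length ys = M * L}. (\<Prod>k<M * L. P (xs ! k, ys ! k)) *
            (if Xi \<Delta> \<delta> L M xs (sel ys) \<ge> \<xi> then 1 else 0))
         \<le> min (px xs) (exp (- (real L * D)) powr (\<xi> * real M))"
proof -
  define Ly where "Ly = {ys::'y list. length ys = M * L}"
  define Arr where "Arr = (\<lambda>\<sigma>. arrange L M xs \<sigma>) ` {\<sigma>. \<sigma> permutes {..<M}}"
  define bad where "bad z = {i\<in>{..<M}. \<delta> \<le> frag_dist \<Delta> L (frag L xs i) (frag L z i)}" for z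
  define Z where "Z = {z\<in>Arr. \<xi> * real M \<le> real (card (bad z))}"
  define ind where "ind ys = (if Xi \<Delta> \<delta> L M xs (sel ys) \<ge> \<xi> then 1 else (0::real))" for ys
  define e where "e = exp (- (real L * D))"
  define E where "E = e powr (\<xi> * real M)"
  have finLy: "finite Ly" unfolding Ly_def using finite_lists_length_eq[of "UNIV::'y set"] by simp
  have finArr: "finite Arr" unfolding Arr_def by (intro finite_imageI finite_permutations) simp
  have finZ: "finite Z" unfolding Z_def using finArr by simp
  have Arr_len: "z \<in> Arr \<Longrightarrow> length z = M * L" for z
    unfolding Arr_def using length_arrange[OF len] by auto
  have ind01: "0 \<le> ind ys" "ind ys \<le> 1" for ys unfolding ind_def by auto
  have joint: "(\<Prod>k<M * L. P (xs ! k, ys ! k)) = px xs * lik P xs ys" for ys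
    unfolding px_def lik_def len by (simp add: P_eq prod.distrib)
  have LHS: "(\<Sum>ys\<in>Ly. (\<Prod>k<M * L. P (xs ! k, ys ! k)) * ind ys) = px xs * (\<Sum>ys\<in>Ly. lik P xs ys * ind ys)"
    by (simp add: joint sum_distrib_left mult.assoc)
  have b1: "(\<Sum>ys\<in>Ly. lik P xs ys * ind ys) \<le> 1"
  proof -
    have "(\<Sum>ys\<in>Ly. lik P xs ys * ind ys) \<le> (\<Sum>ys\<in>Ly. lik P xs ys)"
      by (intro sum_mono) (simp add: ind01 lik_nonneg mult_left_le)
    also have "\<dots> = 1" using sum_lik[of xs] unfolding Ly_def len by simp
    finally show ?thesis .
  qed
  have c2: "lik P xs ys * ind ys \<le> (\<Sum>z\<in>Z. sqrt (lik P xs ys * lik P z ys))" if ys: "ys \<in> Ly" for ys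
  proof (cases "Xi \<Delta> \<delta> L M xs (sel ys) \<ge> \<xi>")
    case False
    then show ?thesis unfolding ind_def by (simp add: sum_nonneg lik_nonneg)
  next
    case True
    have iML: "is_ML P L M xs ys (sel ys)" using hML ys unfolding Ly_def by simp
    then have perm: "sel ys permutes {..<M}" unfolding is_ML_def by simp
    have "lik P (arrange L M xs id) ys \<le> lik P (arrange L M xs (sel ys)) ys"
      using iML permutes_id unfolding is_ML_def by blast
    then have lle: "lik P xs ys \<le> lik P (arrange L M xs (sel ys)) ys"
      using arrange_id[OF len] by simp
    define z0 where "z0 = arrange L M xs (sel ys)"
    have "bad z0 = {i\<in>{..<M}. \<delta> \<le> frag_dist \<Delta> L (frag L xs i) (frag L xs (sel ys i))}"
      unfolding bad_def z0_def using frag_arrange[OF len perm] by auto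
    then have "Xi \<Delta> \<delta> L M xs (sel ys) = real (card (bad z0)) / real M"
      unfolding Xi_def by simp
    with True M have "\<xi> * real M \<le> real (card (bad z0))"
      by (simp add: le_divide_eq)
    moreover have "z0 \<in> Arr" unfolding z0_def Arr_def using perm by auto
    ultimately have z0Z: "z0 \<in> Z" unfolding Z_def by simp
    have "lik P xs ys * ind ys = sqrt (lik P xs ys * lik P xs ys)"
      using True lik_nonneg unfolding ind_def by simp
    also have "\<dots> \<le> sqrt (lik P xs ys * lik P z0 ys)"
      unfolding z0_def by (intro real_sqrt_le_mono mult_left_mono) (use lle lik_nonneg in auto)
    also have "\<dots> \<le> (\<Sum>z\<in>Z. sqrt (lik P xs ys * lik P z ys))"
      by (rule member_le_sum[OF z0Z _ finZ]) (simp add: lik_nonneg)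
    finally show ?thesis .
  qed
  have c3: "(\<Sum>ys\<in>Ly. sqrt (lik P xs ys * lik P z ys)) \<le> E" if zZ: "z \<in> Z" for z
  proof -
    from zZ obtain \<sigma> where perm: "\<sigma> permutes {..<M}" and z: "z = arrange L M xs \<sigma>"
      unfolding Z_def Arr_def by auto
    have lz: "length z = M * L" using z length_arrange[OF len perm] by simp
    define B where "B i = (\<Prod>j<L. bhatt P (frag L xs i ! j) (frag L z i ! j))" for i
    have "(\<Sum>ys\<in>Ly. sqrt (lik P xs ys * lik P z ys)) = (\<Prod>k<M*L. bhatt P (xs ! k) (z ! k))"
      using sum_sqrt_lik[of z xs] lz len unfolding Ly_def by simp
    also have "\<dots> = (\<Prod>i<M. \<Prod>j<L. bhatt P (xs ! (i*L+j)) (z ! (i*L+j)))"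
      by (rule prod_block)
    also have "\<dots> = (\<Prod>i<M. B i)"
      unfolding B_def using nth_frag[OF len] nth_frag[OF lz] by simp
    also have "\<dots> \<le> E"
      unfolding E_def
    proof (rule bad_prod)
      show "0 \<le> B i" for i unfolding B_def by (intro prod_nonneg) (simp add: bhatt_nonneg)
      show "B i \<le> 1" for i unfolding B_def by (intro prod_le_1) (simp add: bhatt_nonneg bhatt_le1)
      show "B i \<le> e" if "i \<in> bad z" for i
        using frag_bound[OF L Dle, of "frag L xs i" "frag L z i"] that
        unfolding B_def bad_def e_def by simp
      show "bad z \<subseteq> {..<M}" unfolding bad_def by auto
      show "0 < e" unfolding e_def by simp
      show "e \<le> 1" unfolding e_def using D0 by simp
      show "\<xi> * real M \<le> real (card (bad z))" using zZ unfolding Z_def by simp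
    qed
    finally show ?thesis .
  qed
  have c4: "real (card Z) * px xs \<le> 1"
  proof -
    have "real (card Z) * px xs = (\<Sum>z\<in>Z. px z)"
    proof -
      have "(\<Sum>z\<in>Z. px z) = (\<Sum>z\<in>Z. px xs)"
      proof (rule sum.cong[OF refl])
        fix z assume "z \<in> Z"
        then obtain \<sigma> where "\<sigma> permutes {..<M}" "z = arrange L M xs \<sigma>"
          unfolding Z_def Arr_def by auto
        then show "px z = px xs" using px_arrange[OF len] by simp
      qed
      then show ?thesis by simp
    qed
    also have "\<dots> \<le> (\<Sum>z\<in>{z. length z = M * L}. px z)"
      by (rule sum_mono2) (use finite_lists_length_eq[of "UNIV::'x set"] Arr_len px_nonneg in \<open>auto simp: Z_def\<close>)
    also have "\<dots> = 1" by (rule sum_px)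
    finally show ?thesis .
  qed
  have b2: "px xs * (\<Sum>ys\<in>Ly. lik P xs ys * ind ys) \<le> E"
  proof -
    have "(\<Sum>ys\<in>Ly. lik P xs ys * ind ys) \<le> (\<Sum>ys\<in>Ly. \<Sum>z\<in>Z. sqrt (lik P xs ys * lik P z ys))"
      by (rule sum_mono) (rule c2)
    also have "\<dots> = (\<Sum>z\<in>Z. \<Sum>ys\<in>Ly. sqrt (lik P xs ys * lik P z ys))"
      by (rule sum.swap)
    also have "\<dots> \<le> (\<Sum>z\<in>Z. E)" by (rule sum_mono) (rule c3)
    also have "\<dots> = real (card Z) * E" by simp
    finally have "px xs * (\<Sum>ys\<in>Ly. lik P xs ys * ind ys) \<le> px xs * (real (card Z) * E)"
      using px_nonneg by (simp add: mult_left_mono)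
    also have "\<dots> = (real (card Z) * px xs) * E" by simp
    also have "\<dots> \<le> 1 * E" by (rule mult_right_mono[OF c4]) (simp add: E_def)
    finally show ?thesis by simp
  qed
  have "(\<Sum>ys\<in>Ly. (\<Prod>k<M * L. P (xs ! k, ys ! k)) * ind ys) \<le> min (px xs) E"
    unfolding LHS using b2 b1 px_nonneg by (simp add: mult_left_le)
  then show ?thesis unfolding Ly_def ind_def E_def e_def by simp
qed

end


context chan begin

lemma min_powr: fixes a b s :: real shows "0 < a \<Longrightarrow> 0 < b \<Longrightarrow> 0 \<le> s \<Longrightarrow> s \<le> 1 \<Longrightarrow> min a b \<le> a powr (1 - s) * b powr s"
proof -
  assume a: "0 < a" "0 < b" "0 \<le> s" "s \<le> 1"
  have m: "0 < min a b" using a by (simp add: min_def)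
  have "min a b powr (1 - s) * min a b powr s = min a b powr ((1 - s) + s)"
    by (rule powr_add[symmetric])
  then have "min a b = min a b powr (1 - s) * min a b powr s"
    using m by simp
  also have "\<dots> \<le> a powr (1 - s) * b powr s"
    using a m by (intro mult_mono powr_mono2) auto
  finally show ?thesis .
qed

lemma sum_px_powr: "(\<Sum>xs\<in>{xs. length xs = n}. px xs powr r) = (\<Sum>x\<in>UNIV. PX P x powr r) ^ n"
proof -
  have "(\<Sum>xs\<in>{xs. length xs = n}. px xs powr r) = (\<Sum>xs\<in>{xs. length xs = n}. \<Prod>k<n. PX P (xs ! k) powr r)"
    unfolding px_def by (intro sum.cong refl) (simp add: prod_powr_distrib)
  also have "\<dots> = (\<Sum>x\<in>UNIV. PX P x powr r) ^ n"
    by (subst sum_lists_prod[of "\<lambda>k x. PX P x powr r"]) simp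
  finally show ?thesis .
qed

lemma FP_bound:
  fixes \<Delta> :: "'x \<Rightarrow> 'x \<Rightarrow> real" and sel :: "nat \<Rightarrow> 'x list \<Rightarrow> 'y list \<Rightarrow> nat \<Rightarrow> nat"
  assumes M: "2 \<le> M" and beta: "0 < \<beta>"
    and D0: "0 \<le> D" and Dle: "ereal D \<le> dstar P \<Delta> \<delta>" and xi: "0 < \<xi>"
    and s: "0 < s" "s < 1"
    and sel_ML: "\<And>xs ys. length xs = M * fraglen \<beta> M \<Longrightarrow> length ys = M * fraglen \<beta> M \<Longrightarrow>
                   is_ML P (fraglen \<beta> M) M xs ys (sel M xs ys)"
  shows "FP P \<Delta> \<beta> \<delta> \<xi> sel M \<le> exp (real (M * fraglen \<beta> M) * (ln (\<Sum>x\<in>UNIV. PX P x powr (1 - s)) - s * (\<xi> * D)))"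
proof -
  define L where "L = fraglen \<beta> M"
  define N where "N = M * L"
  define SS where "SS = (\<Sum>x\<in>UNIV. PX P x powr (1 - s))"
  define E where "E = exp (- (real L * D)) powr (\<xi> * real M)"
  have "ln (real M) > 0" using M by simp
  then have "\<beta> * ln (real M) > 0" using beta by simp
  then have L0: "0 < L" unfolding L_def fraglen_def by simp
  have M0: "0 < M" using M by simp
  have SSpos: "0 < SS" unfolding SS_def
    by (rule sum_pos) (use PX_pos in \<open>auto simp: less_le\<close>)
  have Epos: "0 < E" unfolding E_def by simp
  define T where "T xs = (\<Sum>ys\<in>{ys. length ys = N}. (\<Prod>k<N. P (xs ! k, ys ! k)) *
            (if Xi \<Delta> \<delta> L M xs (sel M xs ys) \<ge> \<xi> then 1 else 0))" for xs
  have setq: "{(xs, ys). length xs = N \<and> length ys = N} = {xs::'x list. length xs = N} \<times> {ys::'y list. length ys = N}"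
    by auto
  have "FP P \<Delta> \<beta> \<delta> \<xi> sel M = (\<Sum>(xs, ys)\<in>{xs::'x list. length xs = N} \<times> {ys::'y list. length ys = N}.
         (\<Prod>k<N. P (xs ! k, ys ! k)) * (if Xi \<Delta> \<delta> L M xs (sel M xs ys) \<ge> \<xi> then 1 else 0))"
    unfolding FP_def Let_def L_def[symmetric] N_def[symmetric] setq ..
  also have "\<dots> = (\<Sum>xs\<in>{xs. length xs = N}. T xs)"
    unfolding T_def by (rule sum.cartesian_product[symmetric])
  also have "\<dots> \<le> (\<Sum>xs\<in>{xs. length xs = N}. px xs powr (1 - s) * E powr s)"
  proof (rule sum_mono)
    fix xs :: "'x list" assume "xs \<in> {xs. length xs = N}"
    then have len: "length xs = M * L" unfolding N_def by simp
    have "T xs \<le> min (px xs) E"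
      unfolding T_def E_def N_def
      by (rule per_xs[OF M0 L0 len D0 Dle xi]) (use sel_ML len in \<open>auto simp: L_def\<close>)
    also have "\<dots> \<le> px xs powr (1 - s) * E powr s"
      by (rule min_powr) (use px_pos Epos s in auto)
    finally show "T xs \<le> px xs powr (1 - s) * E powr s" .
  qed
  also have "\<dots> = SS ^ N * E powr s"
    unfolding SS_def by (simp add: sum_distrib_right[symmetric] sum_px_powr)
  also have "\<dots> = exp (real N * (ln SS - s * (\<xi> * D)))"
  proof -
    have "SS ^ N = exp (real N * ln SS)" using SSpos
      by (simp add: powr_realpow[symmetric] powr_def)
    moreover have "E powr s = exp (- (real N * (s * (\<xi> * D))))"
      unfolding E_def N_def by (simp add: powr_def algebra_simps)
    ultimately show ?thesis by (simp add: exp_add[symmetric] algebra_simps)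
  qed
  finally show ?thesis unfolding N_def L_def SS_def .
qed

end

lemma t1: fixes p :: real
  shows "((\<lambda>s. exp ((1 - s) * ln p)) has_real_derivative exp ((1 - 0) * ln p) * (- ln p)) (at 0)"
  by (rule derivative_eq_intros refl | simp)+
lemma t2: fixes p :: "'x::finite \<Rightarrow> real"
  shows "((\<lambda>s. \<Sum>x\<in>UNIV. exp ((1 - s) * ln (p x))) has_real_derivative (\<Sum>x\<in>UNIV. exp ((1 - 0) * ln (p x)) * (- ln (p x)))) (at 0)"
  by (rule DERIV_sum) (rule t1)
lemma t3: fixes p :: "'x::finite \<Rightarrow> real"
  assumes "(\<Sum>x\<in>UNIV. exp ((1 - 0) * ln (p x))) = 1"
  shows "((\<lambda>s. ln (\<Sum>x\<in>UNIV. exp ((1 - s) * ln (p x)))) has_real_derivative (\<Sum>x\<in>UNIV. exp ((1 - 0) * ln (p x)) * (- ln (p x)))) (at 0)"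
proof -
  have "DERIV ln (\<Sum>x\<in>UNIV. exp ((1 - 0) * ln (p x))) :> 1 / (\<Sum>x\<in>UNIV. exp ((1 - 0) * ln (p x)))"
    using assms by (intro DERIV_ln_divide) simp
  from DERIV_chain2[OF this t2[of p]] show ?thesis using assms by simp
qed


context chan begin

lemma exists_s:
  assumes "entropyX P < K"
  shows "\<exists>s. 0 < s \<and> s < 1 \<and> ln (\<Sum>x\<in>UNIV. PX P x powr (1 - s)) < s * K"
proof -
  define f where "f s = ln (\<Sum>x\<in>UNIV. exp ((1 - s) * ln (PX P x)))" for s
  have g0: "(\<Sum>x\<in>UNIV. exp ((1 - 0) * ln (PX P x))) = 1"
    using PX_sum PX_pos by simp
  have "(f has_real_derivative (\<Sum>x\<in>UNIV. exp ((1 - 0) * ln (PX P x)) * (- ln (PX P x)))) (at 0)"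
    unfolding f_def by (rule t3) (rule g0)
  then have d: "(f has_real_derivative entropyX P) (at 0)"
    using PX_pos by (simp add: g0 entropyX_def sum_negf)
  have f0: "f 0 = 0" unfolding f_def using g0 by simp
  have "((\<lambda>h. (f (0 + h) - f 0) / h) \<longlongrightarrow> entropyX P) (at 0)"
    using d by (simp add: DERIV_def)
  then have "((\<lambda>h. f h / h) \<longlongrightarrow> entropyX P) (at 0)" using f0 by simp
  then have "eventually (\<lambda>h. f h / h < K) (at 0)"
    using assms by (rule order_tendstoD(2))
  then have "eventually (\<lambda>h. f h / h < K) (at_right 0)"
    by (simp add: eventually_at_split)
  then obtain b where b: "b > 0" "\<And>y. y > 0 \<Longrightarrow> y < b \<Longrightarrow> f y / y < K"
    by (auto simp: eventually_at_right_field)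
  define s where "s = min (b/2) (1/2)"
  have s: "0 < s" "s < 1" "s < b" using b unfolding s_def by auto
  have "f s / s < K" using b s by auto
  then have "f s < s * K" using s by (simp add: divide_less_eq mult.commute)
  moreover have "f s = ln (\<Sum>x\<in>UNIV. PX P x powr (1 - s))"
    unfolding f_def powr_def using PX_pos by (simp add: less_imp_neq[symmetric] mult.commute)
  ultimately show ?thesis using s by auto
qed

end

theorem theorem6:
  fixes P :: "'x::finite \<times> 'y::finite \<Rightarrow> real"
    and \<Delta> :: "'x \<Rightarrow> 'x \<Rightarrow> real"
    and \<beta> \<delta> \<xi> :: real
    and sel :: "nat \<Rightarrow> 'x list \<Rightarrow> 'y list \<Rightarrow> nat \<Rightarrow> nat"
  assumes P_nonneg: "\<And>z. 0 \<le> P z"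
    and P_sum: "(\<Sum>z\<in>UNIV. P z) = 1"
    and PX_pos: "\<And>x. 0 < PX P x"
    and Delta_nonneg: "\<And>a b. 0 \<le> \<Delta> a b"
    and beta_pos: "0 < \<beta>"
    and beta_lt: "\<beta> * entropyX P < 1"
    and delta_pos: "0 < \<delta>"
    and xi_pos: "0 < \<xi>"
    and xi_gt: "ereal (entropyX P) < ereal \<xi> * dstar P \<Delta> \<delta>"
    and sel_ML: "\<And>M xs ys. length xs = M * fraglen \<beta> M \<Longrightarrow> length ys = M * fraglen \<beta> M \<Longrightarrow>
                   is_ML P (fraglen \<beta> M) M xs ys (sel M xs ys)"
  shows "(\<lambda>M. FP P \<Delta> \<beta> \<delta> \<xi> sel M) \<longlonglongrightarrow> 0"
proof -
  interpret chan P using P_nonneg P_sum PX_pos by unfold_locales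
  have H0: "0 \<le> entropyX P" by (rule entropy_nonneg)
  obtain D where D0: "0 \<le> D" and Dle: "ereal D \<le> dstar P \<Delta> \<delta>" and HD: "entropyX P < \<xi> * D"
  proof (cases "dstar P \<Delta> \<delta>" rule: ereal_cases)
    case (real r)
    then have "entropyX P < \<xi> * r" using xi_gt by simp
    moreover have "0 \<le> r"
    proof (rule ccontr)
      assume "\<not> 0 \<le> r"
      then have "\<xi> * r < 0" using xi_pos by (simp add: mult_pos_neg)
      then show False using \<open>entropyX P < \<xi> * r\<close> H0 by linarith
    qed
    ultimately show ?thesis using that real by auto
  next
    case PInf
    have "entropyX P < \<xi> * ((entropyX P + 1) / \<xi>)" using xi_pos by simp
    moreover have "0 \<le> (entropyX P + 1) / \<xi>" using H0 xi_pos by simp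
    ultimately show ?thesis using that PInf by auto
  next
    case MInf
    then show ?thesis using xi_gt xi_pos by simp
  qed
  obtain s where s: "0 < s" "s < 1" and c: "ln (\<Sum>x\<in>UNIV. PX P x powr (1 - s)) < s * (\<xi> * D)"
    using exists_s[OF HD] by blast
  define c where "c = ln (\<Sum>x\<in>UNIV. PX P x powr (1 - s)) - s * (\<xi> * D)"
  have cneg: "c < 0" using c unfolding c_def by simp
  have lim: "(\<lambda>M. exp c ^ M) \<longlonglongrightarrow> 0"
    by (rule LIMSEQ_power_zero) (use cneg in simp)
  show ?thesis
  proof (rule tendsto_sandwich[OF _ _ tendsto_const lim])
    show "eventually (\<lambda>M. 0 \<le> FP P \<Delta> \<beta> \<delta> \<xi> sel M) sequentially"
    proof (intro always_eventually allI)
      fix M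
      show "0 \<le> FP P \<Delta> \<beta> \<delta> \<xi> sel M"
        unfolding FP_def Let_def
        by (rule sum_nonneg) (simp add: case_prod_unfold prod_nonneg P_nonneg)
    qed
    show "eventually (\<lambda>M. FP P \<Delta> \<beta> \<delta> \<xi> sel M \<le> exp c ^ M) sequentially"
      unfolding eventually_sequentially
    proof (intro exI allI impI)
      fix M :: nat assume M: "2 \<le> M"
      have "FP P \<Delta> \<beta> \<delta> \<xi> sel M \<le> exp (real (M * fraglen \<beta> M) * c)"
        unfolding c_def by (rule FP_bound[OF M beta_pos D0 Dle xi_pos s]) (rule sel_ML)
      also have "\<dots> \<le> exp (real M * c)"
      proof -
        have "ln (real M) > 0" using M by simp
        then have "\<beta> * ln (real M) > 0" using beta_pos by simp
        then have "0 < fraglen \<beta> M" unfolding fraglen_def by simp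
        then have "1 \<le> fraglen \<beta> M" by simp
        then have "real M * 1 \<le> real M * real (fraglen \<beta> M)" by (intro mult_left_mono) auto
        then have "real M \<le> real (M * fraglen \<beta> M)" by simp
        then show ?thesis using mult_right_mono_neg[OF _ less_imp_le[OF cneg]] by simp
      qed
      also have "\<dots> = exp c ^ M" by (simp add: exp_of_nat_mult)
      finally show "FP P \<Delta> \<beta> \<delta> \<xi> sel M \<le> exp c ^ M" .
    qed
  qed
qed

end
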